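(* Let $K$ be a convex subset of a Hilbert space $H$ whose linear span is closed, let $0=t_0<\dots<t_N=1$ and $x_0,\dots,x_N\in K$. If the solution $\gamma_K$ of problem $(\mathrm E_K)$ satisfies that $\gamma_K(t)$ lies in the relative interior of $K$ for all $t\in[0,1]$, then $\gamma_K=\gamma_H$, the solution of $(\mathrm E_H)$.
   Context: For a convex subset $K$ of a Hilbert space, problem $(\mathrm E_K)$ is: minimize $E[\gamma]=\int_0^1\|\ddot\gamma(t)\|^2\,dt$ over twice differentiable curves $\gamma:[0,1]\to K$ subject to $\gamma(t_i)=x_i$ for all $i$. By strict convexity of $E$ on admissible curves, the minimizer is unique when it exists, and is denoted $\gamma_K$. *)

theory Defs
  imports "HOL-Analysis.Analysis"
begin

definition twice_diff_on01 :: "(real \<Rightarrow> 'a::real_normed_vector) \<Rightarrow> bool" where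
  "twice_diff_on01 \<gamma> \<longleftrightarrow>
     (\<exists>\<gamma>' \<gamma>''. \<forall>t\<in>{0..1}.
        (\<gamma> has_vector_derivative \<gamma>' t) (at t within {0..1}) \<and>
        (\<gamma>' has_vector_derivative \<gamma>'' t) (at t within {0..1}))"

definition second_deriv01 :: "(real \<Rightarrow> 'a::real_normed_vector) \<Rightarrow> real \<Rightarrow> 'a" where
  "second_deriv01 \<gamma> t =
     vector_derivative (\<lambda>s. vector_derivative \<gamma> (at s within {0..1})) (at t within {0..1})"

definition energy_density :: "(real \<Rightarrow> 'a::real_normed_vector) \<Rightarrow> real \<Rightarrow> real" where
  "energy_density \<gamma> t = (norm (second_deriv01 \<gamma> t))\<^sup>2"

definition energy :: "(real \<Rightarrow> 'a::real_normed_vector) \<Rightarrow> real" where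
  "energy \<gamma> = integral {0..1} (energy_density \<gamma>)"

definition admissible ::
  "'a::real_normed_vector set \<Rightarrow> nat \<Rightarrow> (nat \<Rightarrow> real) \<Rightarrow> (nat \<Rightarrow> 'a) \<Rightarrow> (real \<Rightarrow> 'a) \<Rightarrow> bool" where
  "admissible K N t x \<gamma> \<longleftrightarrow>
     twice_diff_on01 \<gamma> \<and> (\<forall>s\<in>{0..1}. \<gamma> s \<in> K) \<and> (\<forall>i\<le>N. \<gamma> (t i) = x i) \<and>
     energy_density \<gamma> integrable_on {0..1}"

definition solves_E ::
  "'a::real_normed_vector set \<Rightarrow> nat \<Rightarrow> (nat \<Rightarrow> real) \<Rightarrow> (nat \<Rightarrow> 'a) \<Rightarrow> (real \<Rightarrow> 'a) \<Rightarrow> bool" where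
  "solves_E K N t x \<gamma> \<longleftrightarrow>
     admissible K N t x \<gamma> \<and> (\<forall>\<delta>. admissible K N t x \<delta> \<longrightarrow> energy \<gamma> \<le> energy \<delta>)"

end

theory Submission
  imports Defs
begin

lemma onb_exists:
  fixes S :: "'a::real_inner set"
  assumes "finite S"
  shows "\<exists>E. finite E \<and> (\<forall>e\<in>E. e \<bullet> e = 1) \<and> (\<forall>e\<in>E. \<forall>f\<in>E. e \<noteq> f \<longrightarrow> e \<bullet> f = 0) \<and> span E = span S"
  using assms
proof (induction rule: finite_induct)
  case empty
  show ?case by (intro exI[of _ "{}"]) auto
next
  case (insert a S)
  then obtain E where E: "finite E" "\<forall>e\<in>E. e \<bullet> e = 1" "\<forall>e\<in>E. \<forall>f\<in>E. e \<noteq> f \<longrightarrow> e \<bullet> f = 0" "span E = span S"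
    by blast
  define w where "w = a - (\<Sum>e\<in>E. (e \<bullet> a) *\<^sub>R e)"
  have ortho: "e \<bullet> w = 0" if "e \<in> E" for e
  proof -
    have "e \<bullet> (\<Sum>f\<in>E. (f \<bullet> a) *\<^sub>R f) = (\<Sum>f\<in>E. (f \<bullet> a) * (e \<bullet> f))"
      by (simp add: inner_sum_right)
    also have "\<dots> = (\<Sum>f\<in>E. if f = e then e \<bullet> a else 0)"
      using E that by (intro sum.cong) auto
    also have "\<dots> = e \<bullet> a" using E(1) that by simp
    finally show ?thesis by (simp add: w_def inner_diff_right)
  qed
  have aw: "w - a \<in> span E" by (simp add: w_def span_sum span_scale span_base span_neg)
  have spa: "span (insert a E) = span (insert a S)"
    using E(4) by (simp add: span_insert)
  show ?case
  proof (cases "w = 0")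
    case True
    then have "a \<in> span S" using aw E(4) by (metis diff_zero span_neg minus_diff_eq)
    then have "span (insert a S) = span S" by (rule span_redundant)
    with E show ?thesis by (intro exI[of _ E]) auto
  next
    case False
    define u where "u = w /\<^sub>R norm w"
    have uu: "u \<bullet> u = 1" using False
      by (simp add: u_def power2_norm_eq_inner[symmetric] power2_eq_square)
    have ue: "e \<bullet> u = 0" if "e \<in> E" for e using ortho[OF that] by (simp add: u_def)
    have unE: "u \<notin> E" using uu ue by force
    have "span (insert u E) = span (insert w E)"
      unfolding span_eq
    proof
      show "insert u E \<subseteq> span (insert w E)"
        by (auto simp: u_def intro: span_base span_scale)
      have "w = norm w *\<^sub>R u" using False by (simp add: u_def)
      then show "insert w E \<subseteq> span (insert u E)"
        by (metis insert_subset span_base span_scale span_superset subset_insertI2 insertI1)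
    qed
    also have "\<dots> = span (insert a E)" using aw by (rule eq_span_insert_eq)
    finally have "span (insert u E) = span (insert a S)" using spa by simp
    moreover have "\<forall>e\<in>insert u E. \<forall>f\<in>insert u E. e \<noteq> f \<longrightarrow> e \<bullet> f = 0"
      using E(3) ue by (auto simp: inner_commute)
    ultimately show ?thesis using E uu
      by (intro exI[of _ "insert u E"]) auto
  qed
qed

definition proj :: "'a::real_inner set \<Rightarrow> 'a \<Rightarrow> 'a" where
  "proj E y = (\<Sum>e\<in>E. (e \<bullet> y) *\<^sub>R e)"

definition onb :: "'a::real_inner set \<Rightarrow> bool" where
  "onb E \<longleftrightarrow> finite E \<and> (\<forall>e\<in>E. e \<bullet> e = 1) \<and> (\<forall>e\<in>E. \<forall>f\<in>E. e \<noteq> f \<longrightarrow> e \<bullet> f = 0)"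

lemma proj_bl: "bounded_linear (proj E)"
  unfolding proj_def
  by (intro bounded_linear_sum bounded_linear_scaleR_left bounded_linear_compose[OF bounded_linear_scaleR_left] bounded_linear_inner_right)

lemma proj_inner:
  assumes "onb E" "e \<in> E"
  shows "e \<bullet> proj E y = e \<bullet> y"
proof -
  have "e \<bullet> proj E y = (\<Sum>f\<in>E. (f \<bullet> y) * (e \<bullet> f))"
    by (simp add: proj_def inner_sum_right)
  also have "\<dots> = (\<Sum>f\<in>E. if f = e then e \<bullet> y else 0)"
    using assms by (intro sum.cong) (auto simp: onb_def)
  also have "\<dots> = e \<bullet> y" using assms by (simp add: onb_def)
  finally show ?thesis .
qed

lemma proj_span: "proj E y \<in> span E"
  unfolding proj_def by (intro span_sum span_scale span_base)

lemma proj_orth: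
  assumes "onb E"
  shows "proj E y \<bullet> (y - proj E y) = 0"
proof -
  have "proj E y \<bullet> (y - proj E y) = (\<Sum>e\<in>E. (e \<bullet> y) * (e \<bullet> (y - proj E y)))"
    by (simp add: proj_def inner_sum_left)
  also have "\<dots> = 0" using assms by (simp add: inner_diff_right proj_inner)
  finally show ?thesis .
qed

lemma proj_id:
  assumes "onb E" "v \<in> span E"
  shows "proj E v = v"
proof -
  define w where "w = v - proj E v"
  have "w \<in> span E" using assms(2) proj_span[of E v] unfolding w_def by (rule span_diff)
  moreover have "orthogonal w e" if "e \<in> E" for e
    using proj_inner[OF assms(1) that, of v]
    by (simp add: w_def orthogonal_def inner_diff_left inner_diff_right inner_commute)
  ultimately have "orthogonal w w"
    by (metis orthogonal_commute orthogonal_to_span)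
  then show ?thesis by (simp add: w_def orthogonal_def)
qed

lemma proj_norm_sq:
  assumes "onb E"
  shows "(norm (proj E y))\<^sup>2 = (\<Sum>e\<in>E. (e \<bullet> y)\<^sup>2)"
proof -
  have "(norm (proj E y))\<^sup>2 = proj E y \<bullet> proj E y" by (simp add: power2_norm_eq_inner)
  also have "\<dots> = proj E y \<bullet> y" using proj_orth[OF assms, of y]
    by (simp add: inner_diff_right)
  also have "\<dots> = (\<Sum>e\<in>E. (e \<bullet> y)\<^sup>2)"
    by (simp add: proj_def inner_sum_right power2_eq_square inner_commute)
  finally show ?thesis .
qed

lemma proj_norm_le:
  assumes "onb E"
  shows "norm (proj E y) \<le> norm y"
proof -
  have "(norm (proj E y))\<^sup>2 = proj E y \<bullet> y" using proj_orth[OF assms, of y]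
    by (simp add: inner_diff_right power2_norm_eq_inner)
  also have "\<dots> \<le> norm (proj E y) * norm y" by (metis Cauchy_Schwarz_ineq2 abs_le_iff)
  finally have "norm (proj E y) * norm (proj E y) \<le> norm (proj E y) * norm y"
    by (simp add: power2_eq_square)
  then show ?thesis
    by (metis mult_le_cancel_left norm_ge_zero order_less_le not_less mult_zero_left)
qed

lemma inner_proj:
  "a \<bullet> proj E y = (\<Sum>e\<in>E. (e \<bullet> y) * (e \<bullet> a))"
  by (simp add: proj_def inner_sum_right inner_commute)

definition D2 :: "(real \<Rightarrow> 'a::real_normed_vector) \<Rightarrow> (real \<Rightarrow> 'a) \<Rightarrow> bool" where
  "D2 \<gamma> a \<longleftrightarrow> (\<exists>\<gamma>'. \<forall>t\<in>{0..1}. (\<gamma> has_vector_derivative \<gamma>' t) (at t within {0..1}) \<and>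
      (\<gamma>' has_vector_derivative a t) (at t within {0..1}))"

lemma vd01:
  assumes "(f has_vector_derivative f') (at t within {0..1})" "t \<in> {0..1::real}"
  shows "vector_derivative f (at t within {0..1}) = f'"
  using vector_derivative_within_cbox[of 0 1 t f f'] assms by simp

lemma D2_sd:
  assumes "D2 \<gamma> a" "t \<in> {0..1}"
  shows "second_deriv01 \<gamma> t = a t"
proof -
  obtain \<gamma>' where g: "\<forall>t\<in>{0..1}. (\<gamma> has_vector_derivative \<gamma>' t) (at t within {0..1}) \<and>
      (\<gamma>' has_vector_derivative a t) (at t within {0..1})"
    using assms(1) unfolding D2_def by blast
  have eq: "vector_derivative \<gamma> (at s within {0..1}) = \<gamma>' s" if "s \<in> {0..1}" for s
    using g that vd01[of \<gamma> "\<gamma>' s" s] by blast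
  have "((\<lambda>s. vector_derivative \<gamma> (at s within {0..1})) has_vector_derivative a t) (at t within {0..1})"
    by (rule has_vector_derivative_transform[OF assms(2)]) (use eq g assms(2) in auto)
  then show ?thesis unfolding second_deriv01_def by (rule vd01[OF _ assms(2)])
qed

lemma D2_twice: "D2 \<gamma> a \<Longrightarrow> twice_diff_on01 \<gamma>"
  unfolding D2_def twice_diff_on01_def by blast

lemma twice_D2:
  assumes "twice_diff_on01 \<gamma>"
  shows "D2 \<gamma> (second_deriv01 \<gamma>)"
proof -
  obtain \<gamma>' \<gamma>'' where g: "\<forall>t\<in>{0..1}. (\<gamma> has_vector_derivative \<gamma>' t) (at t within {0..1}) \<and>
      (\<gamma>' has_vector_derivative \<gamma>'' t) (at t within {0..1})"
    using assms unfolding twice_diff_on01_def by blast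
  then have d: "D2 \<gamma> \<gamma>''" unfolding D2_def by blast
  have "(\<gamma>' has_vector_derivative second_deriv01 \<gamma> t) (at t within {0..1})" if "t \<in> {0..1}" for t
    using g that D2_sd[OF d that] by simp
  then show ?thesis unfolding D2_def
    using g by blast
qed

lemma D2_comb:
  assumes "D2 \<gamma> a" "D2 \<delta> c"
  shows "D2 (\<lambda>s. u *\<^sub>R \<gamma> s + v *\<^sub>R \<delta> s) (\<lambda>s. u *\<^sub>R a s + v *\<^sub>R c s)"
proof -
  obtain \<gamma>' where g: "\<forall>t\<in>{0..1}. (\<gamma> has_vector_derivative \<gamma>' t) (at t within {0..1}) \<and>
      (\<gamma>' has_vector_derivative a t) (at t within {0..1})"
    using assms(1) unfolding D2_def by blast
  obtain \<delta>' where d: "\<forall>t\<in>{0..1}. (\<delta> has_vector_derivative \<delta>' t) (at t within {0..1}) \<and>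
      (\<delta>' has_vector_derivative c t) (at t within {0..1})"
    using assms(2) unfolding D2_def by blast
  have "((\<lambda>s. u *\<^sub>R \<gamma> s + v *\<^sub>R \<delta> s) has_vector_derivative u *\<^sub>R \<gamma>' t + v *\<^sub>R \<delta>' t) (at t within {0..1}) \<and>
     ((\<lambda>s. u *\<^sub>R \<gamma>' s + v *\<^sub>R \<delta>' s) has_vector_derivative u *\<^sub>R a t + v *\<^sub>R c t) (at t within {0..1})"
    if t: "t \<in> {0..1}" for t
  proof -
    note sc = bounded_linear.has_vector_derivative[OF bounded_linear_scaleR_right]
    have a1: "(\<gamma> has_vector_derivative \<gamma>' t) (at t within {0..1})" "(\<gamma>' has_vector_derivative a t) (at t within {0..1})"
      using g t by auto
    have a2: "(\<delta> has_vector_derivative \<delta>' t) (at t within {0..1})" "(\<delta>' has_vector_derivative c t) (at t within {0..1})"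
      using d t by auto
    have b1: "((\<lambda>s. u *\<^sub>R \<gamma> s) has_vector_derivative u *\<^sub>R \<gamma>' t) (at t within {0..1})"
      by (rule sc[OF a1(1)])
    have b2: "((\<lambda>s. v *\<^sub>R \<delta> s) has_vector_derivative v *\<^sub>R \<delta>' t) (at t within {0..1})"
      by (rule sc[OF a2(1)])
    have b3: "((\<lambda>s. u *\<^sub>R \<gamma>' s) has_vector_derivative u *\<^sub>R a t) (at t within {0..1})"
      by (rule sc[OF a1(2)])
    have b4: "((\<lambda>s. v *\<^sub>R \<delta>' s) has_vector_derivative v *\<^sub>R c t) (at t within {0..1})"
      by (rule sc[OF a2(2)])
    show ?thesis
      using has_vector_derivative_add[OF b1 b2] has_vector_derivative_add[OF b3 b4] by (rule conjI)
  qed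
  then show ?thesis unfolding D2_def
    by (intro exI[of _ "\<lambda>s. u *\<^sub>R \<gamma>' s + v *\<^sub>R \<delta>' s"] ballI) simp
qed

lemma D2_proj:
  assumes "D2 \<gamma> a"
  shows "D2 (\<lambda>s. z + proj E (\<gamma> s - z)) (\<lambda>s. proj E (a s))"
proof -
  obtain \<gamma>' where g: "\<forall>t\<in>{0..1}. (\<gamma> has_vector_derivative \<gamma>' t) (at t within {0..1}) \<and>
      (\<gamma>' has_vector_derivative a t) (at t within {0..1})"
    using assms(1) unfolding D2_def by blast
  have 1: "((\<lambda>s. z + proj E (\<gamma> s - z)) has_vector_derivative proj E (\<gamma>' t)) (at t within {0..1})"
    if "t \<in> {0..1}" for t
  proof -
    have "((\<lambda>s. \<gamma> s - z) has_vector_derivative \<gamma>' t) (at t within {0..1})"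
      using has_vector_derivative_diff[OF _ has_vector_derivative_const, of \<gamma> "\<gamma>' t" _ z] g that by auto
    from bounded_linear.has_vector_derivative[OF proj_bl this]
    have "((\<lambda>s. proj E (\<gamma> s - z)) has_vector_derivative proj E (\<gamma>' t)) (at t within {0..1})" .
    from has_vector_derivative_add[OF has_vector_derivative_const this, of z] show ?thesis by simp
  qed
  have 2: "((\<lambda>s. proj E (\<gamma>' s)) has_vector_derivative proj E (a t)) (at t within {0..1})"
    if "t \<in> {0..1}" for t
    using bounded_linear.has_vector_derivative[OF proj_bl] g that by blast
  show ?thesis unfolding D2_def
    using 1 2 by (intro exI[of _ "\<lambda>s. proj E (\<gamma>' s)"] ballI) simp
qed

lemma D2_cont:
  assumes "D2 \<gamma> a"
  shows "continuous_on {0..1} \<gamma>"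
proof -
  obtain \<gamma>' where g: "\<forall>t\<in>{0..1}. (\<gamma> has_vector_derivative \<gamma>' t) (at t within {0..1})"
    using assms(1) unfolding D2_def by blast
  have "continuous (at t within {0..1}) \<gamma>" if "t \<in> {0..1}" for t
    using g that has_vector_derivative_continuous by blast
  then show ?thesis by (simp add: continuous_on_eq_continuous_within)
qed

lemma D2_inner_meas:
  fixes a :: "real \<Rightarrow> 'a::{real_inner,complete_space}"
  assumes "D2 \<gamma> a"
  shows "(\<lambda>t. e \<bullet> a t) \<in> borel_measurable (lebesgue_on {0..1})"
proof -
  obtain \<gamma>' where g: "\<forall>t\<in>{0..1}. (\<gamma>' has_vector_derivative a t) (at t within {0..1})"
    using assms(1) unfolding D2_def by blast
  have "((\<lambda>s. e \<bullet> \<gamma>' s) has_vector_derivative e \<bullet> a t) (at t within {0..1})" if "t \<in> {0..1}" for t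
    using bounded_linear.has_vector_derivative[OF bounded_linear_inner_right] g that by blast
  then have "((\<lambda>t. e \<bullet> a t) has_integral (e \<bullet> \<gamma>' 1 - e \<bullet> \<gamma>' 0)) {0..1}"
    using fundamental_theorem_of_calculus[of 0 1 "\<lambda>s. e \<bullet> \<gamma>' s" "\<lambda>t. e \<bullet> a t"] by auto
  then have "(\<lambda>t. e \<bullet> a t) integrable_on {0..1}" by blast
  then show ?thesis by (rule integrable_imp_measurable)
qed

lemma cmul_int: "f integrable_on S \<Longrightarrow> (\<lambda>x. (c::real) * f x) integrable_on S"
  using integrable_cmul[of f S c] by simp

theorem proposition8:
  fixes K :: "'a::{real_inner, complete_space} set"
    and N :: nat and t :: "nat \<Rightarrow> real" and x :: "nat \<Rightarrow> 'a"
    and \<gamma>K :: "real \<Rightarrow> 'a"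
  assumes "convex K"
    and "closed (span K)"
    and "t 0 = 0" and "t N = 1"
    and "\<forall>i<N. t i < t (Suc i)"
    and "\<forall>i\<le>N. x i \<in> K"
    and "solves_E K N t x \<gamma>K"
    and "\<forall>s\<in>{0..1}. \<gamma>K s \<in> rel_interior K"
  shows "solves_E UNIV N t x \<gamma>K"
proof -
  from assms(7) have admK: "admissible K N t x \<gamma>K"
    and minK: "\<And>\<delta>. admissible K N t x \<delta> \<Longrightarrow> energy \<gamma>K \<le> energy \<delta>"
    by (auto simp: solves_E_def)
  have admU: "admissible UNIV N t x \<gamma>K" using admK by (simp add: admissible_def)
  have main: "energy \<gamma>K \<le> energy \<delta>" if dA: "admissible UNIV N t x \<delta>" for \<delta>
  proof -
    define a where "a = second_deriv01 \<gamma>K"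
    define c where "c = second_deriv01 \<delta>"
    have Da: "D2 \<gamma>K a" using admK twice_D2 by (auto simp: admissible_def a_def)
    have Dc: "D2 \<delta> c" using dA twice_D2 by (auto simp: admissible_def c_def)
    have ia: "(\<lambda>s. (norm (a s))\<^sup>2) integrable_on {0..1}"
      using admK by (simp add: admissible_def energy_density_def[abs_def] a_def)
    have ic: "(\<lambda>s. (norm (c s))\<^sup>2) integrable_on {0..1}"
      using dA by (simp add: admissible_def energy_density_def[abs_def] c_def)
    have Ea: "energy \<gamma>K = integral {0..1} (\<lambda>s. (norm (a s))\<^sup>2)"
      by (simp add: energy_def energy_density_def[abs_def] a_def)
    have Ec: "energy \<delta> = integral {0..1} (\<lambda>s. (norm (c s))\<^sup>2)"
      by (simp add: energy_def energy_density_def[abs_def] c_def)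
    define x0 where "x0 = x 0"
    have x0K: "x0 \<in> K" using assms(6) by (simp add: x0_def)
    obtain E where E: "onb E" "span E = span ((\<lambda>i. x i - x0) ` {..N})"
      using onb_exists[of "(\<lambda>i. x i - x0) ` {..N}"] by (auto simp: onb_def)
    define P where "P = (\<lambda>s. x0 + proj E (\<delta> s - x0))"
    have DP: "D2 P (\<lambda>s. proj E (c s))" unfolding P_def using D2_proj[OF Dc] .
    have Pint: "P (t i) = x i" if "i \<le> N" for i
    proof -
      have "\<delta> (t i) = x i" using dA that by (simp add: admissible_def)
      moreover have "x i - x0 \<in> span E" using E(2) that by (auto intro: span_base)
      moreover have "proj E (x i - x0) = x i - x0" by (rule proj_id[OF E(1) calculation(2)])
      ultimately show ?thesis by (simp add: P_def)
    qed
    have PaffK: "P s \<in> affine hull K" for s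
    proof -
      have x0h: "x0 \<in> affine hull K" using x0K by (rule hull_inc)
      have "(\<lambda>i. x i - x0) ` {..N} \<subseteq> (\<lambda>x. - x0 + x) ` K"
        using assms(6) by force
      then have "span E \<subseteq> span ((\<lambda>x. - x0 + x) ` K)" using E(2) span_mono by metis
      then have "proj E (\<delta> s - x0) \<in> span ((\<lambda>x. - x0 + x) ` K)" using proj_span by blast
      then show ?thesis unfolding P_def affine_hull_span_gen[OF x0h] by blast
    qed
    have ma: "(\<lambda>s. e \<bullet> a s) \<in> borel_measurable (lebesgue_on {0..1})" for e
      using D2_inner_meas[OF Da] .
    have mc: "(\<lambda>s. e \<bullet> c s) \<in> borel_measurable (lebesgue_on {0..1})" for e
      using D2_inner_meas[OF Dc] .
    have qc_eq: "(norm (proj E (c s)))\<^sup>2 = (\<Sum>e\<in>E. (e \<bullet> c s)\<^sup>2)" for s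
      using proj_norm_sq[OF E(1)] .
    have iq: "(\<lambda>s. (norm (proj E (c s)))\<^sup>2) integrable_on {0..1}"
    proof (rule measurable_bounded_by_integrable_imp_integrable[OF _ ic])
      show "(\<lambda>s. (norm (proj E (c s)))\<^sup>2) \<in> borel_measurable (lebesgue_on {0..1})"
        unfolding qc_eq by (intro borel_measurable_sum borel_measurable_power mc)
      show "norm ((norm (proj E (c s)))\<^sup>2) \<le> (norm (c s))\<^sup>2" for s
        using proj_norm_le[OF E(1), of "c s"] by (simp add: power_mono)
    qed simp
    have EP: "energy P = integral {0..1} (\<lambda>s. (norm (proj E (c s)))\<^sup>2)"
      unfolding energy_def energy_density_def
      by (rule integral_cong) (simp add: D2_sd[OF DP])
    have EPd: "energy P \<le> energy \<delta>"
      unfolding EP Ec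
      by (rule integral_le[OF iq ic]) (use proj_norm_le[OF E(1)] in \<open>simp add: power_mono\<close>)
    have iX: "(\<lambda>s. a s \<bullet> proj E (c s)) integrable_on {0..1}"
    proof (rule measurable_bounded_by_integrable_imp_integrable[OF _ integrable_add[OF ia iq]])
      show "(\<lambda>s. a s \<bullet> proj E (c s)) \<in> borel_measurable (lebesgue_on {0..1})"
        unfolding inner_proj by (intro borel_measurable_sum borel_measurable_times mc ma)
      show "norm (a s \<bullet> proj E (c s)) \<le> (norm (a s))\<^sup>2 + (norm (proj E (c s)))\<^sup>2" for s
      proof -
        have "norm (a s \<bullet> proj E (c s)) \<le> norm (a s) * norm (proj E (c s))"
          using Cauchy_Schwarz_ineq2 by simp
        also have "\<dots> \<le> (norm (a s))\<^sup>2 + (norm (proj E (c s)))\<^sup>2"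
          using sum_squares_bound[of "norm (a s)" "norm (proj E (c s))"]
            mult_nonneg_nonneg[OF norm_ge_zero norm_ge_zero, of "a s" "proj E (c s)"] by linarith
        finally show ?thesis .
      qed
    qed simp
    obtain r where r: "r > 0" "\<And>s. s \<in> {0..1} \<Longrightarrow> ball (\<gamma>K s) r \<inter> affine hull K \<subseteq> K"
    proof -
      define U where "U = \<Union>{T. open T \<and> T \<inter> affine hull K \<subseteq> K}"
      have oU: "open U" unfolding U_def by auto
      have UK: "U \<inter> affine hull K \<subseteq> K" unfolding U_def by blast
      have sub: "\<gamma>K ` {0..1} \<subseteq> U"
        using assms(8) unfolding rel_interior U_def by blast
      have cpt: "compact (\<gamma>K ` {0..1})"
        by (rule compact_continuous_image[OF D2_cont[OF Da]]) simp
      obtain e where e: "e > 0" "(\<Union>y\<in>\<gamma>K ` {0..1}. ball y e) \<subseteq> U"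
        using compact_subset_open_imp_ball_epsilon_subset[OF cpt oU sub] by blast
      show ?thesis
      proof (rule that[OF e(1)])
        fix s :: real assume "s \<in> {0..1}"
        then have "ball (\<gamma>K s) e \<subseteq> U" using e(2) by blast
        then show "ball (\<gamma>K s) e \<inter> affine hull K \<subseteq> K" using UK by blast
      qed
    qed
    obtain M where M: "M > 0" "\<And>s. s \<in> {0..1} \<Longrightarrow> norm (P s - \<gamma>K s) \<le> M"
    proof -
      have "continuous_on {0..1} (\<lambda>s. P s - \<gamma>K s)"
        by (intro continuous_on_diff D2_cont[OF DP] D2_cont[OF Da])
      then have "compact ((\<lambda>s. P s - \<gamma>K s) ` {0..1})"
        by (rule compact_continuous_image) simp
      then have "bounded ((\<lambda>s. P s - \<gamma>K s) ` {0..1})" by (rule compact_imp_bounded)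
      then obtain b where "b > 0" "\<forall>y\<in>(\<lambda>s. P s - \<gamma>K s) ` {0..1}. norm y \<le> b"
        unfolding bounded_pos by blast
      then show ?thesis using that by blast
    qed
    define \<epsilon> where "\<epsilon> = min 1 (r / (2 * M))"
    have \<epsilon>: "0 < \<epsilon>" "\<epsilon> \<le> 1" "\<epsilon> * M < r"
    proof -
      show "0 < \<epsilon>" using r M by (simp add: \<epsilon>_def)
      show "\<epsilon> \<le> 1" by (simp add: \<epsilon>_def)
      have "\<epsilon> * M \<le> r / (2 * M) * M" using M by (intro mult_right_mono) (auto simp: \<epsilon>_def)
      also have "\<dots> = r / 2" using M by (simp add: field_simps)
      finally show "\<epsilon> * M < r" using r by simp
    qed
    define \<nu> where "\<nu> = (\<lambda>s. (1 - \<epsilon>) *\<^sub>R \<gamma>K s + \<epsilon> *\<^sub>R P s)"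
    have D\<nu>: "D2 \<nu> (\<lambda>s. (1 - \<epsilon>) *\<^sub>R a s + \<epsilon> *\<^sub>R proj E (c s))"
      unfolding \<nu>_def by (rule D2_comb[OF Da DP])
    have \<nu>K: "\<nu> s \<in> K" if s: "s \<in> {0..1}" for s
    proof -
      have gK: "\<gamma>K s \<in> K" using admK s by (simp add: admissible_def)
      have "\<nu> s \<in> affine hull K" unfolding \<nu>_def
        by (rule mem_affine[OF affine_affine_hull]) (use hull_inc[OF gK] PaffK in auto)
      moreover have "\<nu> s \<in> ball (\<gamma>K s) r"
      proof -
        have "\<gamma>K s - \<nu> s = - (\<epsilon> *\<^sub>R (P s - \<gamma>K s))" by (simp add: \<nu>_def algebra_simps)
        then have "dist (\<gamma>K s) (\<nu> s) = \<epsilon> * norm (P s - \<gamma>K s)"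
          using \<epsilon> by (simp add: dist_norm)
        also have "\<dots> \<le> \<epsilon> * M" using M(2)[OF s] \<epsilon> by (simp add: mult_left_mono)
        finally show ?thesis using \<epsilon> by simp
      qed
      ultimately show ?thesis using r(2)[OF s] by blast
    qed
    have \<nu>int: "\<nu> (t i) = x i" if "i \<le> N" for i
    proof -
      have "\<gamma>K (t i) = x i" using admK that by (simp add: admissible_def)
      then show ?thesis using Pint[OF that] by (simp add: \<nu>_def algebra_simps)
    qed
    define \<rho> where "\<rho> = (\<lambda>s. (1-\<epsilon>)\<^sup>2 * (norm (a s))\<^sup>2 + (2*(1-\<epsilon>)*\<epsilon>) * (a s \<bullet> proj E (c s))
        + \<epsilon>\<^sup>2 * (norm (proj E (c s)))\<^sup>2)"
    have \<rho>eq: "energy_density \<nu> s = \<rho> s" if "s \<in> {0..1}" for s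
    proof -
      have "energy_density \<nu> s = (norm ((1 - \<epsilon>) *\<^sub>R a s + \<epsilon> *\<^sub>R proj E (c s)))\<^sup>2"
        by (simp add: energy_density_def D2_sd[OF D\<nu> that])
      also have "\<dots> = \<rho> s"
        unfolding \<rho>_def power2_norm_eq_inner
        by (simp add: inner_add_left inner_add_right inner_commute algebra_simps power2_eq_square)
      finally show ?thesis .
    qed
    have i\<rho>: "\<rho> integrable_on {0..1}"
      unfolding \<rho>_def by (intro integrable_add cmul_int ia iq iX)
    have adm\<nu>: "admissible K N t x \<nu>"
      unfolding admissible_def
      using D2_twice[OF D\<nu>] \<nu>K \<nu>int integrable_cong[of "{0..1}" "energy_density \<nu>" \<rho>] \<rho>eq i\<rho>
      by auto
    have E\<nu>: "energy \<nu> = integral {0..1} \<rho>"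
      unfolding energy_def by (rule integral_cong) (rule \<rho>eq)
    have "energy \<nu> \<le> integral {0..1} (\<lambda>s. (1-\<epsilon>) * (norm (a s))\<^sup>2 + \<epsilon> * (norm (proj E (c s)))\<^sup>2)"
      unfolding E\<nu>
    proof (rule integral_le[OF i\<rho>])
      show "(\<lambda>s. (1-\<epsilon>) * (norm (a s))\<^sup>2 + \<epsilon> * (norm (proj E (c s)))\<^sup>2) integrable_on {0..1}"
        by (intro integrable_add cmul_int ia iq)
      fix s :: real
      define A where "A = (norm (a s))\<^sup>2"
      define B where "B = (norm (proj E (c s)))\<^sup>2"
      define X where "X = a s \<bullet> proj E (c s)"
      have "0 \<le> (norm (a s - proj E (c s)))\<^sup>2" by simp
      also have "\<dots> = A - 2 * X + B"
        unfolding A_def B_def X_def power2_norm_eq_inner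
        by (simp add: inner_diff_left inner_diff_right inner_commute)
      finally have X: "2 * X \<le> A + B" by simp
      have "\<rho> s = (1-\<epsilon>)\<^sup>2 * A + (2*(1-\<epsilon>)*\<epsilon>) * X + \<epsilon>\<^sup>2 * B"
        by (simp add: \<rho>_def A_def B_def X_def)
      also have "\<dots> \<le> (1-\<epsilon>)\<^sup>2 * A + ((1-\<epsilon>)*\<epsilon>) * (A + B) + \<epsilon>\<^sup>2 * B"
        using X \<epsilon> mult_left_mono[OF X, of "(1-\<epsilon>)*\<epsilon>"] by (simp add: algebra_simps)
      also have "\<dots> = (1-\<epsilon>) * A + \<epsilon> * B" by (simp add: algebra_simps power2_eq_square)
      finally show "\<rho> s \<le> (1-\<epsilon>) * (norm (a s))\<^sup>2 + \<epsilon> * (norm (proj E (c s)))\<^sup>2"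
        by (simp add: A_def B_def)
    qed
    also have "\<dots> = (1-\<epsilon>) * energy \<gamma>K + \<epsilon> * energy P"
      unfolding Ea EP
      by (subst integral_add) (auto intro: cmul_int ia iq)
    finally have "energy \<nu> \<le> (1-\<epsilon>) * energy \<gamma>K + \<epsilon> * energy P" .
    moreover have "energy \<gamma>K \<le> energy \<nu>" by (rule minK[OF adm\<nu>])
    ultimately have "\<epsilon> * energy \<gamma>K \<le> \<epsilon> * energy P" by (simp add: algebra_simps)
    then have "energy \<gamma>K \<le> energy P" using \<epsilon>(1) by simp
    then show ?thesis using EPd by simp
  qed
  show ?thesis unfolding solves_E_def using admU main by blast
qed

end
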